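(* Let $p\ge1$ and $N\ge1$, and assume $(p-1)\beta_1^2<2(\lambda_1-\beta_0)$. Set $\mu_p:=p(\lambda_1-\beta_0)-\frac{p(p-1)}{2}\beta_1^2$. Then there exists $\tau_0>0$ such that, for every fixed $\tau\in(0,\tau_0)$, the following holds. There is a constant $C>0$, depending only on $N$ and $p$ and independent of $n$, such that the scheme below satisfies \[ \mathbb E\|Y_n\|^p\le Ce^{-\frac{\mu_p}{2}t_n}\,\mathbb E\|Y_0\|^p\qquad\text{for all }n\in\mathbb N. \] Here the scheme is: $t_n=n\tau$, $\Delta W_n=W(t_{n+1})-W(t_n)$, $Y_n=(Y_n^1,\dots,Y_n^N)^\top\in\mathbb R^N$ is defined by \[ Y_{n+1}=M^{-1}\big(Y_n+\beta_1Y_n\Delta W_n\big),\qquad M=I_N+\tau(\Lambda_N-\beta_0I_N), \] with $\Lambda_N=\operatorname{diag}(\lambda_1,\dots,\lambda_N)$ and $Y_0=(y_0^1,\dots,y_0^N)^\top$. Equivalently, for $k=1,\dots,N$, \[ Y_{n+1}^k=\frac{Y_n^k(1+\beta_1\Delta W_n)}{1+\tau(\lambda_k-\beta_0)},\qquad Y_0^k=y_0^k, \] and $\|Y_n\|^p=\big(\sum_{k=1}^N|Y_n^k|^2\big)^{p/2}$.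
   Context: $W$ is a one-dimensional standard Brownian motion on a complete filtered probability space $(\Omega,\mathcal F,\{\mathcal F_t\},\mathbb P)$, with the natural augmented filtration. $H$ is a Hilbert space. $A$ is a linear, self-adjoint, positive-definite operator on $H$ with compact resolvent. Its eigenpairs $(\lambda_k,\phi_k)$ satisfy $0<\lambda_1\le\lambda_2\le\cdots\to\infty$, and $\{\phi_k\}$ is an orthonormal basis. $\beta_0,\beta_1\in\mathbb R$. The initial datum $y_0\in L^p_{\mathcal F_0}(\Omega;H)$ is an $\mathcal F_0$-measurable $H$-valued random variable with finite $p$-th moment, and $y_0^k=\langle y_0,\phi_k\rangle_H$. The scheme is the implicit Euler–Maruyama discretization of the $N$-mode spectral Galerkin truncation $dY_N=-(\Lambda_N-\beta_0I_N)Y_N\,dt+\beta_1Y_N\,dW$ of $dy+Ay\,dt=\beta_0y\,dt+\beta_1y\,dW$. *)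

theory Defs
  imports "HOL-Probability.Probability"
begin

definition std_brownian_motion ::
  "'a measure \<Rightarrow> (real \<Rightarrow> 'a measure) \<Rightarrow> (real \<Rightarrow> 'a \<Rightarrow> real) \<Rightarrow> bool" where
  "std_brownian_motion M F W \<longleftrightarrow>
     prob_space M \<and>
     filtration (space M) F \<and>
     (\<forall>t. sets (F t) \<subseteq> sets M) \<and>
     (\<forall>t\<ge>0. W t \<in> borel_measurable (F t)) \<and>
     (AE \<omega> in M. W 0 \<omega> = 0) \<and>
     (AE \<omega> in M. continuous_on {0..} (\<lambda>t. W t \<omega>)) \<and>
     (\<forall>s t. 0 \<le> s \<and> s < t \<longrightarrow>
        distributed M lborel (\<lambda>\<omega>. W t \<omega> - W s \<omega>)
          (\<lambda>x. ennreal (normal_density 0 (sqrt (t - s)) x))) \<and>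
     (\<forall>s t. 0 \<le> s \<and> s < t \<longrightarrow>
        (\<forall>A\<in>sets (F s). \<forall>B\<in>sets borel.
           measure M (A \<inter> ((\<lambda>\<omega>. W t \<omega> - W s \<omega>) -` B \<inter> space M)) =
           measure M A * measure M ((\<lambda>\<omega>. W t \<omega> - W s \<omega>) -` B \<inter> space M)))"

fun iem_scheme ::
  "real \<Rightarrow> real \<Rightarrow> (nat \<Rightarrow> real) \<Rightarrow> real \<Rightarrow> (real \<Rightarrow> 'a \<Rightarrow> real) \<Rightarrow>
   (nat \<Rightarrow> 'a \<Rightarrow> real) \<Rightarrow> nat \<Rightarrow> nat \<Rightarrow> 'a \<Rightarrow> real" where
  "iem_scheme b0 b1 lam tau W Y0 0 k \<omega> = Y0 k \<omega>"
| "iem_scheme b0 b1 lam tau W Y0 (Suc n) k \<omega> =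
     iem_scheme b0 b1 lam tau W Y0 n k \<omega> *
       (1 + b1 * (W (real (Suc n) * tau) \<omega> - W (real n * tau) \<omega>)) /
       (1 + tau * (lam k - b0))"

definition normp :: "real \<Rightarrow> nat \<Rightarrow> (nat \<Rightarrow> real) \<Rightarrow> real" where
  "normp p N y = (\<Sum>k=1..N. \<bar>y k\<bar>\<^sup>2) powr (p / 2)"

end

theory Submission
  imports Defs
begin



lemma powr_bound_half:
  fixes t e :: real assumes "\<bar>t\<bar> \<le> 1/2"
  shows "(1+t) powr e \<le> 2 powr \<bar>e\<bar>"
proof (cases "e \<ge> 0")
  case True
  have "(1+t) powr e \<le> 2 powr e" using assms True by (intro powr_mono2) auto
  then show ?thesis using True by simp
next
  case False
  have "(1+t) powr e = inverse ((1+t) powr (-e))" using assms by (simp add: powr_minus)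
  also have "(1+t) powr (-e) \<ge> (1/2) powr (-e)" using assms False by (intro powr_mono2) auto
  hence "inverse ((1+t) powr (-e)) \<le> inverse ((1/2) powr (-e))"
    by (intro le_imp_inverse_le) auto
  also have "inverse ((1/2::real) powr (-e)) = 2 powr (-e)"
    by (simp add: powr_divide powr_minus_divide inverse_eq_divide)
  finally show ?thesis using False by simp
qed

definition K1 :: "real \<Rightarrow> real" where "K1 p = p*p*(p+2) * 2 powr (p+3)"

lemma taylor3:
  fixes p y :: real assumes p: "1 \<le> p" and y: "\<bar>y\<bar> \<le> 1/2"
  shows "\<bar>(1+y) powr p - (1 + p*y + p*(p-1)/2*y\<^sup>2)\<bar> \<le> K1 p * \<bar>y\<bar>^3"
proof (cases "y = 0")
  case True then show ?thesis by simp
next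
  case False
  define diff where "diff m t = (\<Prod>i<m. (p - real i)) * (1+t) powr (p - real m)" for m t
  have D: "\<forall>m t. m < 3 \<and> -1/2 \<le> t \<and> t \<le> 1/2 \<longrightarrow> DERIV (diff m) t :> diff (Suc m) t"
  proof (intro allI impI)
    fix m :: nat and t :: real assume "m < 3 \<and> -1/2 \<le> t \<and> t \<le> 1/2"
    hence t: "0 < 1 + t" by auto
    have "((\<lambda>t. (\<Prod>i<m. (p - real i)) * (1+t) powr (p - real m)) has_real_derivative
        (\<Prod>i<m. (p - real i)) * ((p - real m) * (1+t) powr (p - real m - 1) * 1)) (at t)"
    proof (intro DERIV_cmult)
      have "((\<lambda>t. 1 + t) has_real_derivative 1) (at t)" by (auto intro!: derivative_eq_intros)
      from DERIV_chain2[where f="\<lambda>z. z powr (p - real m)" and g="\<lambda>t. 1+t" and x=t, OF has_real_derivative_powr[OF t] this]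
      show "((\<lambda>t. (1+t) powr (p - real m)) has_real_derivative (p - real m) * (1+t) powr (p - real m - 1) * 1) (at t)"
        by simp
    qed
    moreover have "(\<Prod>i<m. (p - real i)) * ((p - real m) * (1+t) powr (p - real m - 1) * 1) = diff (Suc m) t"
      by (simp add: diff_def algebra_simps)
    moreover have "diff m = (\<lambda>t. (\<Prod>i<m. (p - real i)) * (1+t) powr (p - real m))"
      by (simp add: diff_def fun_eq_iff)
    ultimately show "DERIV (diff m) t :> diff (Suc m) t" by metis
  qed
  have d0: "diff 0 = (\<lambda>y. (1+y) powr p)" by (simp add: diff_def fun_eq_iff)
  have yb: "-1/2 \<le> y" "y \<le> 1/2" using y by auto
  obtain t where t: "(if y < 0 then y < t \<and> t < 0 else 0 < t \<and> t < y)"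
    and eq: "(\<lambda>y. (1+y) powr p) y = (\<Sum>m<3. (diff m 0 / fact m) * (y - 0)^m) + (diff 3 t / fact 3) * (y - 0)^3"
    using Taylor[of 3 diff "\<lambda>y. (1+y) powr p" "-1/2" "1/2" 0 y, OF _ d0 D] yb False
    by auto
  have sum: "(\<Sum>m<3. (diff m 0 / fact m) * (y - 0)^m) = 1 + p*y + p*(p-1)/2*y\<^sup>2"
    by (simp add: diff_def eval_nat_numeral power2_eq_square)
  have tb: "\<bar>t\<bar> \<le> 1/2" using t y by (auto split: if_splits)
  have "\<bar>diff 3 t\<bar> = \<bar>p*(p-1)*(p-2)\<bar> * (1+t) powr (p-3)"
    by (simp add: diff_def eval_nat_numeral abs_mult)
  also have "\<dots> \<le> (p*p*(p+2)) * 2 powr (p+3)"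
  proof (rule mult_mono)
    have "\<bar>p*(p-1)*(p-2)\<bar> = p*\<bar>p-1\<bar>*\<bar>p-2\<bar>" using p by (simp add: abs_mult)
    also have "\<dots> \<le> p*p*(p+2)" using p by (intro mult_mono) auto
    finally show "\<bar>p*(p-1)*(p-2)\<bar> \<le> p*p*(p+2)" .
    have "(1+t) powr (p-3) \<le> 2 powr \<bar>p-3\<bar>" by (rule powr_bound_half[OF tb])
    also have "\<dots> \<le> 2 powr (p+3)" using p by (intro powr_mono) auto
    finally show "(1+t) powr (p-3) \<le> 2 powr (p+3)" .
  qed (use p in auto)
  finally have d3: "\<bar>diff 3 t\<bar> \<le> K1 p" unfolding K1_def .
  have "\<bar>(1+y) powr p - (1 + p*y + p*(p-1)/2*y\<^sup>2)\<bar> = \<bar>diff 3 t\<bar> / 6 * \<bar>y\<bar>^3"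
    using eq sum by (simp add: abs_mult power_abs eval_nat_numeral)
  also have "\<dots> \<le> K1 p * \<bar>y\<bar>^3"
    using d3 by (intro mult_right_mono) auto
  finally show ?thesis .
qed

definition KK :: "real \<Rightarrow> real" where "KK p = K1 p + 9 * 2 powr p + 4*p"
definition qq :: "real \<Rightarrow> nat" where "qq p = nat \<lceil>p\<rceil> + 2"

lemma K1_nonneg: "1 \<le> p \<Longrightarrow> 0 \<le> K1 p" by (simp add: K1_def)

lemma pointwise:
  fixes p y :: real assumes p: "1 \<le> p"
  shows "\<bar>1+y\<bar> powr p \<le> 1 + p*y + p*(p-1)/2*y\<^sup>2 + KK p * (\<bar>y\<bar>^3 + y^(2*qq p))"
proof (cases "\<bar>y\<bar> \<le> 1/2")
  case True
  have "\<bar>1+y\<bar> = 1 + y" using True by auto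
  hence "\<bar>1+y\<bar> powr p \<le> 1 + p*y + p*(p-1)/2*y\<^sup>2 + K1 p * \<bar>y\<bar>^3"
    using taylor3[OF p True] by simp
  also have "K1 p * \<bar>y\<bar>^3 \<le> KK p * (\<bar>y\<bar>^3 + y^(2*qq p))"
  proof -
    have "K1 p * \<bar>y\<bar>^3 \<le> KK p * \<bar>y\<bar>^3" using p by (intro mult_right_mono) (auto simp: KK_def)
    also have "\<dots> \<le> KK p * (\<bar>y\<bar>^3 + y^(2*qq p))"
      using p K1_nonneg[OF p] by (intro mult_left_mono) (auto simp: KK_def power_mult)
    finally show ?thesis .
  qed
  finally show ?thesis by simp
next
  case False
  define m where "m = max 1 \<bar>y\<bar>"
  have m1: "1 \<le> m" by (simp add: m_def)
  have pq: "p \<le> real (2 * qq p)"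
  proof -
    have "p \<le> real (nat \<lceil>p\<rceil>)" using p by linarith
    then show ?thesis unfolding qq_def by simp
  qed
  have "\<bar>1+y\<bar> powr p \<le> (2*m) powr p" using p by (intro powr_mono2) (auto simp: m_def)
  also have "\<dots> = 2 powr p * m powr p" using m1 by (simp add: powr_mult)
  also have "m powr p \<le> m powr real (2 * qq p)" using m1 pq by (intro powr_mono) auto
  also have "m powr real (2 * qq p) = m ^ (2 * qq p)" using m1 by (subst powr_realpow) auto
  also have "m ^ (2 * qq p) \<le> 1 + y ^ (2 * qq p)"
    by (cases "1 \<le> \<bar>y\<bar>") (auto simp: m_def max_def power_mult power_even_abs)
  finally have A: "\<bar>1+y\<bar> powr p \<le> 2 powr p * (1 + y ^ (2 * qq p))" by simp
  have y3: "1 \<le> 8 * \<bar>y\<bar>^3" "\<bar>y\<bar> \<le> 4 * \<bar>y\<bar>^3"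
  proof -
    have yy: "1/2 \<le> \<bar>y\<bar>" using False by simp
    have h: "(1/2::real)^3 \<le> \<bar>y\<bar>^3" using yy by (intro power_mono) auto
    have "(1/2::real)^3 = 1/8" by (simp add: power3_eq_cube)
    with h show "1 \<le> 8 * \<bar>y\<bar>^3" by linarith
    have h: "\<bar>y\<bar> * (1/2::real)^2 \<le> \<bar>y\<bar> * \<bar>y\<bar>^2" using yy by (intro mult_left_mono power_mono) auto
    have "\<bar>y\<bar> * (1/2::real)^2 = \<bar>y\<bar>/4" "\<bar>y\<bar> * \<bar>y\<bar>^2 = \<bar>y\<bar>^3" by (simp_all add: power2_eq_square power3_eq_cube)
    with h show "\<bar>y\<bar> \<le> 4 * \<bar>y\<bar>^3" by linarith
  qed
  have y2: "0 \<le> y^(2*qq p)" by (simp add: power_mult)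
  have ry: "0 \<le> p*(p-1)/2*y\<^sup>2" using p by simp
  have py: "- (p*\<bar>y\<bar>) \<le> p * y" using p by (cases "y \<ge> 0") auto
  have tp: "0 \<le> 2 powr p" by simp
  define a where "a = \<bar>y\<bar>^3"
  define b where "b = y^(2*qq p)"
  define T where "T = (2::real) powr p"
  have "2 powr p * (1 + y ^ (2 * qq p)) \<le> 1 + p*y + p*(p-1)/2*y\<^sup>2 + KK p * (\<bar>y\<bar>^3 + y^(2*qq p))"
  proof -
    have e: "KK p * (a + b) = K1 p * a + K1 p * b + 9*(T*a) + 9*(T*b) + 4*(p*a) + 4*(p*b)"
      by (simp add: KK_def T_def algebra_simps)
    have f1: "T \<le> 8*(T*a)" using y3 tp unfolding a_def T_def
      by (metis mult.left_commute mult_left_mono mult.right_neutral)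
    have f2: "p * \<bar>y\<bar> \<le> 4*(p*a)" using y3 p unfolding a_def
      by (metis mult.left_commute mult_left_mono order_trans zero_le_one)
    have f3: "0 \<le> K1 p * a" "0 \<le> K1 p * b" "0 \<le> T*a" "0 \<le> p*b" "0 \<le> T*b"
      using K1_nonneg[OF p] y2 p tp unfolding a_def b_def T_def by auto
    have "T * (1 + b) \<le> 1 + p*y + p*(p-1)/2*y\<^sup>2 + KK p * (a + b)"
      using e f1 f2 f3 ry py distrib_left[of T 1 b] by linarith
    then show ?thesis unfolding a_def b_def T_def .
  qed
  with A show ?thesis by linarith
qed




definition K3 :: "real \<Rightarrow> real \<Rightarrow> real" where
  "K3 p b = KK p * (2*\<bar>b\<bar>^3 + b^(2*qq p) * (fact (2*qq p) / (2^qq p * fact (qq p))))"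

lemma KK_nonneg: "1 \<le> p \<Longrightarrow> 0 \<le> KK p" using K1_nonneg by (simp add: KK_def)

lemma gauss_bound:
  fixes \<sigma> b p :: real assumes s: "0 < \<sigma>" "\<sigma> \<le> 1" and p: "1 \<le> p"
  shows "(\<integral>\<^sup>+x. ennreal (normal_density 0 \<sigma> x) * ennreal (\<bar>1+b*x\<bar> powr p) \<partial>lborel)
     \<le> ennreal (1 + p*(p-1)/2*b\<^sup>2*\<sigma>\<^sup>2 + K3 p b * \<sigma>^3)"
proof -
  let ?nd = "normal_density 0 \<sigma>"
  let ?q = "qq p"
  define c :: real where "c = fact (2*?q) / (2^?q * fact ?q)"
  define G where "G x = 1 + p*(b*x) + p*(p-1)/2*(b*x)\<^sup>2 + KK p * (\<bar>b*x\<bar>^3 + (b*x)^(2*?q))" for x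
  have m0: "has_bochner_integral lborel (\<lambda>x. ?nd x) 1"
    using normal_moment_even[OF s(1), where k=0 and \<mu>=0] by simp
  have m1: "has_bochner_integral lborel (\<lambda>x. ?nd x * x) 0"
    using normal_moment_odd[OF s(1), where k=0 and \<mu>=0] by simp
  have m2: "has_bochner_integral lborel (\<lambda>x. ?nd x * x^2) (\<sigma>\<^sup>2)"
    using normal_moment_even[OF s(1), where k=1 and \<mu>=0] by simp
  have m3: "has_bochner_integral lborel (\<lambda>x. ?nd x * \<bar>x\<bar>^3) (2 * \<sigma>^3 * sqrt (2/pi))"
    using normal_moment_abs_odd[OF s(1), where k=1 and \<mu>=0] by (simp add: numeral_3_eq_3)
  have e: "(\<sigma>^?q)^2 = (\<sigma>^2)^?q" by (simp add: power_mult[symmetric] mult.commute)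
  have mq: "has_bochner_integral lborel (\<lambda>x. ?nd x * x^(2*?q)) (\<sigma>^(2*?q) * c)"
    using normal_moment_even[OF s(1), where k="qq p" and \<mu>=0] by (simp add: c_def power_mult_distrib power_divide power_mult field_simps e)
  have all: "has_bochner_integral lborel (\<lambda>x. ?nd x + (p*b) * (?nd x * x) + (p*(p-1)/2*b\<^sup>2) * (?nd x * x^2)
       + (KK p * \<bar>b\<bar>^3) * (?nd x * \<bar>x\<bar>^3) + (KK p * b^(2*?q)) * (?nd x * x^(2*?q)))
     (1 + (p*b)*0 + (p*(p-1)/2*b\<^sup>2) * \<sigma>\<^sup>2 + (KK p * \<bar>b\<bar>^3) * (2 * \<sigma>^3 * sqrt (2/pi))
       + (KK p * b^(2*?q)) * (\<sigma>^(2*?q) * c))"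
    by (intro has_bochner_integral_add has_bochner_integral_mult_right m0 m1 m2 m3 mq)
  have eqf: "(\<lambda>x. ?nd x + (p*b) * (?nd x * x) + (p*(p-1)/2*b\<^sup>2) * (?nd x * x^2)
       + (KK p * \<bar>b\<bar>^3) * (?nd x * \<bar>x\<bar>^3) + (KK p * b^(2*?q)) * (?nd x * x^(2*?q))) = (\<lambda>x. ?nd x * G x)"
    by (auto simp: G_def fun_eq_iff algebra_simps abs_mult power_mult_distrib)
  have hb: "has_bochner_integral lborel (\<lambda>x. ?nd x * G x)
     (1 + (p*(p-1)/2*b\<^sup>2) * \<sigma>\<^sup>2 + (KK p * \<bar>b\<bar>^3) * (2 * \<sigma>^3 * sqrt (2/pi))
       + (KK p * b^(2*?q)) * (\<sigma>^(2*?q) * c))"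
    using all unfolding eqf by simp
  have Gpos: "\<bar>1+b*x\<bar> powr p \<le> G x" for x
    using pointwise[OF p, of "b*x"] unfolding G_def by simp
  have "(\<integral>\<^sup>+x. ennreal (?nd x) * ennreal (\<bar>1+b*x\<bar> powr p) \<partial>lborel) \<le> (\<integral>\<^sup>+x. ennreal (?nd x * G x) \<partial>lborel)"
    by (intro nn_integral_mono) (auto simp: ennreal_mult'[symmetric] intro!: ennreal_leI mult_left_mono Gpos)
  also have "\<dots> = ennreal (integral\<^sup>L lborel (\<lambda>x. ?nd x * G x))"
    using hb Gpos by (intro nn_integral_eq_integral) (auto intro!: mult_nonneg_nonneg order_trans[OF _ Gpos] integrable.intros)
  also have "integral\<^sup>L lborel (\<lambda>x. ?nd x * G x) = 1 + (p*(p-1)/2*b\<^sup>2) * \<sigma>\<^sup>2 + (KK p * \<bar>b\<bar>^3) * (2 * \<sigma>^3 * sqrt (2/pi))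
       + (KK p * b^(2*?q)) * (\<sigma>^(2*?q) * c)"
    using hb by (rule has_bochner_integral_integral_eq)
  also have "\<dots> \<le> 1 + p*(p-1)/2*b\<^sup>2*\<sigma>\<^sup>2 + K3 p b * \<sigma>^3"
  proof -
    have KKn: "0 \<le> KK p" by (rule KK_nonneg[OF p])
    have sp: "sqrt (2/pi) \<le> 1" using pi_gt3 by (simp add: real_sqrt_le_1_iff)
    have a1: "(KK p * \<bar>b\<bar>^3) * (2 * \<sigma>^3 * sqrt (2/pi)) \<le> (KK p * \<bar>b\<bar>^3) * (2 * \<sigma>^3)"
      using KKn s sp by (intro mult_left_mono) auto
    have sq: "\<sigma>^(2*?q) \<le> \<sigma>^3" using s by (intro power_decreasing) (auto simp: qq_def)
    have cn: "0 \<le> c" by (simp add: c_def)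
    have a2: "(KK p * b^(2*?q)) * (\<sigma>^(2*?q) * c) \<le> (KK p * b^(2*?q)) * (\<sigma>^3 * c)"
      using KKn sq cn by (intro mult_left_mono mult_right_mono) (auto simp: power_mult)
    have "K3 p b * \<sigma>^3 = (KK p * \<bar>b\<bar>^3) * (2 * \<sigma>^3) + (KK p * b^(2*?q)) * (\<sigma>^3 * c)"
      by (simp add: K3_def c_def algebra_simps)
    then show ?thesis using a1 a2 by linarith
  qed
  finally show ?thesis by (simp add: ennreal_leI)
qed




lemma K3_nonneg: "1 \<le> p \<Longrightarrow> 0 \<le> K3 p b"
  using KK_nonneg[of p] by (simp add: K3_def)

lemma rate:
  fixes p c b :: real
  assumes p: "1 \<le> p" and c: "0 < c" and mu: "0 < p*c - p*(p-1)/2*b\<^sup>2"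
  shows "\<exists>\<tau>0>0. \<forall>\<tau>. 0 < \<tau> \<and> \<tau> < \<tau>0 \<longrightarrow> sqrt \<tau> \<le> 1 \<and>
     1 + p*(p-1)/2*b\<^sup>2*(sqrt \<tau>)\<^sup>2 + K3 p b * (sqrt \<tau>)^3
       \<le> exp (- ((p*c - p*(p-1)/2*b\<^sup>2)/2) * \<tau>) * (1 + \<tau>*c) powr p"
proof -
  define r where "r = p*(p-1)/2*b\<^sup>2"
  define \<mu> where "\<mu> = p*c - r"
  have mu': "0 < \<mu>" using mu by (simp add: \<mu>_def r_def)
  define Q where "Q = K3 p b + K1 p * c^3 + \<mu>*p*c/2 + 1"
  have Q: "1 \<le> Q" using K3_nonneg[OF p] K1_nonneg[OF p] mu' c p by (simp add: Q_def)
  define \<tau>0 where "\<tau>0 = min 1 (min (1/(2*c)) (min (2/\<mu>) ((\<mu>/(2*Q))\<^sup>2)))"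
  have t0: "0 < \<tau>0" using c mu' Q by (simp add: \<tau>0_def)
  show ?thesis
  proof (intro exI[of _ \<tau>0] conjI allI impI t0)
    fix \<tau> :: real assume t: "0 < \<tau> \<and> \<tau> < \<tau>0"
    define s where "s = sqrt \<tau>"
    have s0: "0 < s" using t by (simp add: s_def)
    have ts: "\<tau> = s\<^sup>2" using t by (simp add: s_def)
    have t1: "\<tau> \<le> 1" using t by (simp add: \<tau>0_def)
    show s1: "sqrt \<tau> \<le> 1" using t1 by simp
    have s1': "s \<le> 1" using s1 by (simp add: s_def)
    have tc: "\<tau>*c \<le> 1/2" using t c by (simp add: \<tau>0_def field_simps)
    have tm: "\<mu>*\<tau>/2 \<le> 1" using t mu' by (simp add: \<tau>0_def field_simps)
    have sQ: "s < \<mu>/(2*Q)"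
    proof -
      have "\<tau> < (\<mu>/(2*Q))\<^sup>2" using t by (simp add: \<tau>0_def)
      hence "sqrt \<tau> < sqrt ((\<mu>/(2*Q))\<^sup>2)" by (rule real_sqrt_less_mono)
      thus ?thesis using mu' Q by (simp add: s_def)
    qed
    hence sQ': "Q * s \<le> \<mu>/2" using Q by (simp add: field_simps)
    have tay: "(1 + \<tau>*c) powr p \<ge> 1 + p*(\<tau>*c) - K1 p * (\<tau>*c)^3"
    proof -
      have "\<bar>\<tau>*c\<bar> \<le> 1/2" using tc t c by simp
      from taylor3[OF p this] have "(1 + \<tau>*c) powr p \<ge> 1 + p*(\<tau>*c) + p*(p-1)/2*(\<tau>*c)\<^sup>2 - K1 p * \<bar>\<tau>*c\<bar>^3"
        by linarith
      moreover have "0 \<le> p*(p-1)/2*(\<tau>*c)\<^sup>2" using p by simp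
      moreover have "\<bar>\<tau>*c\<bar> = \<tau>*c" using t c by simp
      ultimately show ?thesis by simp
    qed
    have ex: "exp (- (\<mu>/2) * \<tau>) \<ge> 1 - \<mu>*\<tau>/2"
      using exp_ge_add_one_self[of "- (\<mu>/2) * \<tau>"] by simp
    have e1: "0 \<le> 1 - \<mu>*\<tau>/2" using tm by simp
    have "exp (- (\<mu>/2) * \<tau>) * (1 + \<tau>*c) powr p \<ge> (1 - \<mu>*\<tau>/2) * (1 + \<tau>*c) powr p"
      using ex by (intro mult_right_mono) auto
    moreover have "(1 - \<mu>*\<tau>/2) * (1 + \<tau>*c) powr p \<ge> (1 - \<mu>*\<tau>/2) * (1 + p*(\<tau>*c) - K1 p * (\<tau>*c)^3)"
      using tay e1 by (intro mult_left_mono) auto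
    moreover have "(1 - \<mu>*\<tau>/2) * (1 + p*(\<tau>*c) - K1 p * (\<tau>*c)^3) \<ge> 1 + r*(s^2) + K3 p b * s^3"
    proof -
      have k1: "0 \<le> K1 p" by (rule K1_nonneg[OF p])
      have e: "(1 - \<mu>*\<tau>/2) * (1 + p*(\<tau>*c) - K1 p * (\<tau>*c)^3)
          = 1 + (r + \<mu>/2) * \<tau> - K1 p * c^3 * \<tau>^3 - \<mu>*p*c/2 * \<tau>^2 + \<mu>*K1 p*c^3/2*\<tau>^4"
        by (simp add: \<mu>_def field_simps power2_eq_square power3_eq_cube eval_nat_numeral)
      have nn: "0 \<le> \<mu>*K1 p*c^3/2*\<tau>^4" using mu' k1 c t by simp
      have "K3 p b * s + K1 p * c^3 * s^4 + \<mu>*p*c/2 * s^2 \<le> Q * s"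
      proof -
        have "s^4 \<le> s" using s0 s1' by (metis power_decreasing_iff power_one_right one_le_numeral pos2
              less_imp_le power_decreasing)
        hence a: "K1 p * c^3 * s^4 \<le> K1 p * c^3 * s" using k1 c by (intro mult_left_mono) auto
        have "s^2 \<le> s" using s0 s1' by (simp add: power2_eq_square mult_le_cancel_right1)
        hence b: "\<mu>*p*c/2 * s^2 \<le> \<mu>*p*c/2 * s" using mu' c p by (intro mult_left_mono) auto
        show ?thesis using a b s0 by (simp add: Q_def algebra_simps)
      qed
      hence "(K3 p b * s + K1 p * c^3 * s^4 + \<mu>*p*c/2 * s^2) * s\<^sup>2 \<le> (\<mu>/2) * s\<^sup>2"
        using sQ' by (intro mult_right_mono) auto
      hence "K3 p b * s^3 + K1 p * c^3 * \<tau>^3 + \<mu>*p*c/2 * \<tau>^2 \<le> \<mu>/2 * \<tau>"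
        by (simp add: ts algebra_simps power2_eq_square power3_eq_cube eval_nat_numeral)
      then show ?thesis using e nn ts by (simp add: algebra_simps)
    qed
    ultimately show "1 + p*(p-1)/2*b\<^sup>2*(sqrt \<tau>)\<^sup>2 + K3 p b * (sqrt \<tau>)^3
       \<le> exp (- ((p*c - p*(p-1)/2*b\<^sup>2)/2) * \<tau>) * (1 + \<tau>*c) powr p"
      unfolding s_def r_def \<mu>_def by linarith
  qed
qed




lemma (in prob_space) indep_var_nn_integral2:
  fixes X Y :: "'a \<Rightarrow> real"
  assumes "indep_var borel X borel Y" "\<And>\<omega>. 0 \<le> X \<omega>" "\<And>\<omega>. 0 \<le> Y \<omega>"
  shows "(\<integral>\<^sup>+\<omega>. ennreal (X \<omega> * Y \<omega>) \<partial>M) = (\<integral>\<^sup>+\<omega>. X \<omega> \<partial>M) * (\<integral>\<^sup>+\<omega>. Y \<omega> \<partial>M)"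
proof -
  let ?X = "\<lambda>\<omega>. ennreal (X \<omega>)" and ?Y = "\<lambda>\<omega>. ennreal (Y \<omega>)"
  have i0: "indep_var borel ?X borel ?Y"
    using indep_var_compose[OF assms(1), of ennreal borel ennreal borel] by (simp add: o_def)
  have **: "(\<lambda> _. borel) = case_bool borel borel"
    by (rule ext, metis (full_types) bool.simps(3) bool.simps(4))
  have ind: "indep_vars (\<lambda>_. borel) (case_bool ?X ?Y) UNIV"
    using i0 unfolding indep_var_def ** .
  have "(\<integral>\<^sup>+\<omega>. ennreal (X \<omega> * Y \<omega>) \<partial>M) = (\<integral>\<^sup>+\<omega>. (\<Prod>i\<in>UNIV. (case_bool ?X ?Y i \<omega>)) \<partial>M)"
    using assms by (simp add: UNIV_bool mult.commute ennreal_mult')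
  also have "\<dots> = (\<Prod>i\<in>UNIV. \<integral>\<^sup>+\<omega>. case_bool ?X ?Y i \<omega> \<partial>M)"
    by (rule indep_vars_nn_integral[OF _ ind]) auto
  also have "\<dots> = (\<integral>\<^sup>+\<omega>. X \<omega> \<partial>M) * (\<integral>\<^sup>+\<omega>. Y \<omega> \<partial>M)"
    by (simp add: UNIV_bool mult.commute)
  finally show ?thesis .
qed

lemma bm_indep:
  assumes BM: "std_brownian_motion M F W" and st: "0 \<le> s" "s < t"
    and Z: "Z \<in> borel_measurable (F s)"
  shows "prob_space.indep_var M borel Z borel (\<lambda>\<omega>. W t \<omega> - W s \<omega>)"
proof -
  interpret prob_space M using BM by (simp add: std_brownian_motion_def)
  have filt: "filtration (space M) F" and subs: "\<And>t. sets (F t) \<subseteq> sets M"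
    and Wm: "\<And>t. t \<ge> 0 \<Longrightarrow> W t \<in> borel_measurable (F t)"
    and ind: "\<And>A B. A \<in> sets (F s) \<Longrightarrow> B \<in> sets borel \<Longrightarrow>
           measure M (A \<inter> ((\<lambda>\<omega>. W t \<omega> - W s \<omega>) -` B \<inter> space M)) =
           measure M A * measure M ((\<lambda>\<omega>. W t \<omega> - W s \<omega>) -` B \<inter> space M)"
    using BM st unfolding std_brownian_motion_def by auto
  have sp: "\<And>t. space (F t) = space M" using filt by (simp add: filtration_def)
  have toM: "\<And>f t. f \<in> borel_measurable (F t) \<Longrightarrow> f \<in> borel_measurable M"
    using subs sp by (rule borel_measurable_subalgebra)
  have Zm: "Z \<in> borel_measurable M" using toM[OF Z] .
  have Wt: "W t \<in> borel_measurable M" "W s \<in> borel_measurable M"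
    using toM[OF Wm] st by auto
  have Dm: "(\<lambda>\<omega>. W t \<omega> - W s \<omega>) \<in> borel_measurable M" using Wt by measurable
  { fix S and X :: "'a \<Rightarrow> real"
    have "Int_stable {X -` A \<inter> space M |A. A \<in> sets S}"
    proof (safe intro!: Int_stableI)
      fix A B assume "A \<in> sets S" "B \<in> sets S"
      then show "\<exists>C. (X -` A \<inter> space M) \<inter> (X -` B \<inter> space M) = (X -` C \<inter> space M) \<and> C \<in> sets S"
        by (intro exI[of _ "A \<inter> B"]) auto
    qed }
  note Int_stable = this
  show ?thesis unfolding indep_var_eq
  proof (intro conjI indep_set_sigma_sets Int_stable Zm Dm)
    show "indep_set {Z -` A \<inter> space M |A. A \<in> sets borel} {(\<lambda>\<omega>. W t \<omega> - W s \<omega>) -` A \<inter> space M |A. A \<in> sets borel}"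
      unfolding indep_sets2_eq
    proof (safe)
      fix A assume "A \<in> sets (borel :: real measure)"
      then show "Z -` A \<inter> space M \<in> events" using Zm by (auto intro: measurable_sets)
    next
      fix A assume "A \<in> sets (borel :: real measure)"
      then show "(\<lambda>\<omega>. W t \<omega> - W s \<omega>) -` A \<inter> space M \<in> events" using Dm by (auto intro: measurable_sets)
    next
      fix A B :: "real set" assume A: "A \<in> sets borel" and B: "B \<in> sets borel"
      have "Z -` A \<inter> space M \<in> sets (F s)"
        using measurable_sets[OF Z A] sp by simp
      from ind[OF this B]
      show "prob ((Z -` A \<inter> space M) \<inter> ((\<lambda>\<omega>. W t \<omega> - W s \<omega>) -` B \<inter> space M)) =
         prob (Z -` A \<inter> space M) * prob ((\<lambda>\<omega>. W t \<omega> - W s \<omega>) -` B \<inter> space M)" .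
    qed
  qed
qed




theorem proposition7:
  fixes M :: "'a measure" and F :: "real \<Rightarrow> 'a measure" and W :: "real \<Rightarrow> 'a \<Rightarrow> real"
    and lam :: "nat \<Rightarrow> real" and \<phi> :: "nat \<Rightarrow> 'h::{real_inner, complete_space}"
    and y0 :: "'a \<Rightarrow> 'h" and \<beta>0 \<beta>1 p :: real and N :: nat
  assumes BM: "std_brownian_motion M F W"
    and lam_pos: "0 < lam 1"
    and lam_mono: "\<And>k. 1 \<le> k \<Longrightarrow> lam k \<le> lam (Suc k)"
    and lam_inf: "filterlim lam at_top sequentially"
    and onb_orth: "\<And>i j. 1 \<le> i \<Longrightarrow> 1 \<le> j \<Longrightarrow> \<phi> i \<bullet> \<phi> j = (if i = j then 1 else 0)"
    and onb_complete: "closure (span (\<phi> ` {1..})) = UNIV"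
    and y0_meas: "y0 \<in> borel_measurable (F 0)"
    and y0_Lp: "integrable M (\<lambda>\<omega>. norm (y0 \<omega>) powr p)"
    and p_ge: "1 \<le> p" and N_ge: "1 \<le> N"
    and cond: "(p - 1) * \<beta>1\<^sup>2 < 2 * (lam 1 - \<beta>0)"
  shows "\<exists>\<tau>0>0. \<exists>C>0. \<forall>\<tau>. 0 < \<tau> \<and> \<tau> < \<tau>0 \<longrightarrow>
           (\<forall>n::nat.
              (\<integral>\<omega>. normp p N (\<lambda>k. iem_scheme \<beta>0 \<beta>1 lam \<tau> W (\<lambda>k \<omega>. y0 \<omega> \<bullet> \<phi> k) n k \<omega>) \<partial>M)
              \<le> C * exp (- ((p * (lam 1 - \<beta>0) - p * (p - 1) / 2 * \<beta>1\<^sup>2) / 2) * (real n * \<tau>))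
                  * (\<integral>\<omega>. normp p N (\<lambda>k. y0 \<omega> \<bullet> \<phi> k) \<partial>M))"
proof -
  interpret prob_space M using BM by (simp add: std_brownian_motion_def)
  have filt: "filtration (space M) F" and subs: "\<And>t. sets (F t) \<subseteq> sets M"
    and Wm: "\<And>t. t \<ge> 0 \<Longrightarrow> W t \<in> borel_measurable (F t)"
    and dist: "\<And>s t. 0 \<le> s \<Longrightarrow> s < t \<Longrightarrow> distributed M lborel (\<lambda>\<omega>. W t \<omega> - W s \<omega>)
          (\<lambda>x. ennreal (normal_density 0 (sqrt (t - s)) x))"
    using BM unfolding std_brownian_motion_def by auto
  have sp: "\<And>t. space (F t) = space M" using filt by (simp add: filtration_def)
  have mono: "\<And>s t. s \<le> t \<Longrightarrow> sets (F s) \<subseteq> sets (F t)" using filt by (simp add: filtration_def)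
  define c where "c = lam 1 - \<beta>0"
  have c: "0 < c"
  proof -
    have "0 \<le> (p - 1) * \<beta>1\<^sup>2" using p_ge by simp
    then show ?thesis using cond by (simp add: c_def)
  qed
  have mu: "0 < p*c - p*(p-1)/2*\<beta>1\<^sup>2"
  proof -
    have "p*c - p*(p-1)/2*\<beta>1\<^sup>2 = p/2 * (2*c - (p-1)*\<beta>1\<^sup>2)" by (simp add: field_simps)
    moreover have "0 < 2*c - (p-1)*\<beta>1\<^sup>2" using cond by (simp add: c_def)
    ultimately show ?thesis using p_ge by simp
  qed
  obtain \<tau>0 where t0: "\<tau>0 > 0" and t0p: "\<And>\<tau>. 0 < \<tau> \<Longrightarrow> \<tau> < \<tau>0 \<Longrightarrow> sqrt \<tau> \<le> 1 \<and>
     1 + p*(p-1)/2*\<beta>1\<^sup>2*(sqrt \<tau>)\<^sup>2 + K3 p \<beta>1 * (sqrt \<tau>)^3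
       \<le> exp (- ((p*c - p*(p-1)/2*\<beta>1\<^sup>2)/2) * \<tau>) * (1 + \<tau>*c) powr p"
    using rate[OF p_ge c mu] by blast
  have lam_ge: "lam 1 \<le> lam k" if "1 \<le> k" for k
    using that
  proof (induction k rule: dec_induct)
    case (step n) then show ?case using lam_mono[of n] by simp
  qed simp
  define \<mu> where "\<mu> = (p * (lam 1 - \<beta>0) - p * (p - 1) / 2 * \<beta>1\<^sup>2) / 2"
  have main: "(\<integral>\<omega>. normp p N (\<lambda>k. iem_scheme \<beta>0 \<beta>1 lam \<tau> W (\<lambda>k \<omega>. y0 \<omega> \<bullet> \<phi> k) n k \<omega>) \<partial>M)
              \<le> 1 * exp (- ((p * (lam 1 - \<beta>0) - p * (p - 1) / 2 * \<beta>1\<^sup>2) / 2) * (real n * \<tau>))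
                  * (\<integral>\<omega>. normp p N (\<lambda>k. y0 \<omega> \<bullet> \<phi> k) \<partial>M)"
    if tau: "0 < \<tau> \<and> \<tau> < \<tau>0" for \<tau> :: real and n :: nat
  proof -
    define Y where "Y = iem_scheme \<beta>0 \<beta>1 lam \<tau> W (\<lambda>k \<omega>. y0 \<omega> \<bullet> \<phi> k)"
    define X where "X n \<omega> = normp p N (\<lambda>k. Y n k \<omega>)" for n \<omega>
    define D where "D n \<omega> = W (real (Suc n) * \<tau>) \<omega> - W (real n * \<tau>) \<omega>" for n \<omega>
    define a where "a = 1 + \<tau> * c"
    have a: "1 \<le> a" using tau c by (simp add: a_def)
    have X_nonneg: "0 \<le> X n \<omega>" for n \<omega> by (simp add: X_def normp_def)
    have Ysuc: "Y (Suc m) k \<omega> = Y m k \<omega> * (1 + \<beta>1 * D m \<omega>) / (1 + \<tau> * (lam k - \<beta>0))" for m k \<omega>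
      by (simp add: Y_def D_def)
    have Y0: "Y 0 k \<omega> = y0 \<omega> \<bullet> \<phi> k" for k \<omega> by (simp add: Y_def)
    have sq_powr: "(x^2) powr (p/2) = x powr p" if "0 \<le> x" for x :: real
    proof (cases "x = 0")
      case False
      hence "x^2 = x powr 2" using that by (simp add: powr_realpow)
      then show ?thesis by (simp add: powr_powr)
    qed simp
    have step: "X (Suc m) \<omega> \<le> (\<bar>1 + \<beta>1 * D m \<omega>\<bar> powr p / a powr p) * X m \<omega>" for m \<omega>
    proof -
      define u where "u = 1 + \<beta>1 * D m \<omega>"
      have trm: "\<bar>Y (Suc m) k \<omega>\<bar>\<^sup>2 \<le> (u\<^sup>2/a\<^sup>2) * \<bar>Y m k \<omega>\<bar>\<^sup>2" if k: "k \<in> {1..N}" for k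
      proof -
        define ak where "ak = 1 + \<tau> * (lam k - \<beta>0)"
        have "\<tau> * c \<le> \<tau> * (lam k - \<beta>0)" using lam_ge[of k] k tau by (intro mult_left_mono) (auto simp: c_def)
        hence ak: "a \<le> ak" by (simp add: a_def ak_def)
        have "\<bar>Y (Suc m) k \<omega>\<bar>\<^sup>2 = (Y m k \<omega>)\<^sup>2 * u\<^sup>2 / ak\<^sup>2"
          by (simp add: Ysuc u_def ak_def power_divide power_mult_distrib)
        also have "\<dots> \<le> (Y m k \<omega>)\<^sup>2 * u\<^sup>2 / a\<^sup>2"
          using a ak by (intro divide_left_mono power_mono mult_pos_pos) auto
        finally show ?thesis by (simp add: mult.commute)
      qed
      have "(\<Sum>k=1..N. \<bar>Y (Suc m) k \<omega>\<bar>\<^sup>2) \<le> (\<Sum>k=1..N. (u\<^sup>2/a\<^sup>2) * \<bar>Y m k \<omega>\<bar>\<^sup>2)"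
        by (rule sum_mono) (rule trm)
      also have "\<dots> = (u\<^sup>2/a\<^sup>2) * (\<Sum>k=1..N. \<bar>Y m k \<omega>\<bar>\<^sup>2)" by (simp add: sum_distrib_left)
      finally have S: "(\<Sum>k=1..N. \<bar>Y (Suc m) k \<omega>\<bar>\<^sup>2) \<le> (u\<^sup>2/a\<^sup>2) * (\<Sum>k=1..N. \<bar>Y m k \<omega>\<bar>\<^sup>2)" .
      have "X (Suc m) \<omega> \<le> ((u\<^sup>2/a\<^sup>2) * (\<Sum>k=1..N. \<bar>Y m k \<omega>\<bar>\<^sup>2)) powr (p/2)"
        unfolding X_def normp_def using S p_ge by (intro powr_mono2) (auto intro: sum_nonneg)
      also have "\<dots> = (u\<^sup>2/a\<^sup>2) powr (p/2) * X m \<omega>"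
        unfolding X_def normp_def by (rule powr_mult)
      also have "(u\<^sup>2/a\<^sup>2) powr (p/2) = \<bar>u\<bar> powr p / a powr p"
      proof -
        have "u\<^sup>2/a\<^sup>2 = (\<bar>u\<bar>/a)^2" by (simp add: power_divide)
        also have "(\<dots>) powr (p/2) = (\<bar>u\<bar>/a) powr p" using a by (intro sq_powr) auto
        also have "\<dots> = \<bar>u\<bar> powr p / a powr p" using a by (simp add: powr_divide)
        finally show ?thesis .
      qed
      finally show ?thesis by (simp add: u_def)
    qed
    have Fmono: "f \<in> borel_measurable (F s) \<Longrightarrow> s \<le> t \<Longrightarrow> f \<in> borel_measurable (F t)" for f s t
      by (rule borel_measurable_subalgebra[OF mono]) (auto simp: sp)
    have toM: "f \<in> borel_measurable (F s) \<Longrightarrow> f \<in> borel_measurable M" for f s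
      by (rule borel_measurable_subalgebra[OF subs]) (auto simp: sp)
    have Ymeas: "Y m k \<in> borel_measurable (F (real m * \<tau>))" for m k
    proof (induction m arbitrary: k)
      case 0
      have "(\<lambda>\<omega>. y0 \<omega> \<bullet> \<phi> k) \<in> borel_measurable (F 0)"
        by (rule borel_measurable_continuous_on[OF _ y0_meas, where f="\<lambda>v. v \<bullet> \<phi> k"])
           (intro continuous_intros)
      moreover have "Y 0 k = (\<lambda>\<omega>. y0 \<omega> \<bullet> \<phi> k)" by (simp add: fun_eq_iff Y0)
      moreover have "real 0 * \<tau> = 0" by simp
      ultimately show ?case by (simp only:)
    next
      case (Suc m)
      have m1: "Y m k \<in> borel_measurable (F (real (Suc m) * \<tau>))"
        using tau by (intro Fmono[OF Suc.IH] mult_right_mono) auto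
      have m2: "W (real m * \<tau>) \<in> borel_measurable (F (real (Suc m) * \<tau>))"
        using tau by (intro Fmono[OF Wm] mult_right_mono mult_nonneg_nonneg) auto
      have m3: "W (real (Suc m) * \<tau>) \<in> borel_measurable (F (real (Suc m) * \<tau>))"
        using Wm tau by simp
      have "(\<lambda>\<omega>. Y m k \<omega> * (1 + \<beta>1 * (W (real (Suc m) * \<tau>) \<omega> - W (real m * \<tau>) \<omega>)) / (1 + \<tau> * (lam k - \<beta>0)))
          \<in> borel_measurable (F (real (Suc m) * \<tau>))"
        by (intro borel_measurable_divide borel_measurable_times borel_measurable_add borel_measurable_diff
             borel_measurable_const m1 m2 m3)
      moreover have "Y (Suc m) k = (\<lambda>\<omega>. Y m k \<omega> * (1 + \<beta>1 * (W (real (Suc m) * \<tau>) \<omega> - W (real m * \<tau>) \<omega>)) / (1 + \<tau> * (lam k - \<beta>0)))"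
        by (simp add: fun_eq_iff Ysuc D_def)
      ultimately show ?case by (simp only:)
    qed
    have Xmeas: "X m \<in> borel_measurable (F (real m * \<tau>))" for m
      unfolding X_def[abs_def] normp_def
      by (intro powr_real_measurable borel_measurable_sum borel_measurable_power borel_measurable_abs
             borel_measurable_const Ymeas)
    define E where "E = exp (- ((p*c - p*(p-1)/2*\<beta>1\<^sup>2)/2) * \<tau>)"
    have E0: "0 < E" by (simp add: E_def)
    have ap: "0 < a powr p" using a by simp
    have tt: "sqrt \<tau> \<le> 1 \<and> 1 + p*(p-1)/2*\<beta>1\<^sup>2*(sqrt \<tau>)\<^sup>2 + K3 p \<beta>1 * (sqrt \<tau>)^3 \<le> E * a powr p"
      using t0p[of \<tau>] tau by (simp add: E_def a_def)
    have Deq: "D m = (\<lambda>\<omega>. W (real (Suc m) * \<tau>) \<omega> - W (real m * \<tau>) \<omega>)" for m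
      by (simp add: fun_eq_iff D_def)
    have st: "0 \<le> real m * \<tau>" "real m * \<tau> < real (Suc m) * \<tau>" for m
      using tau by auto
    have gm: "(\<lambda>x::real. \<bar>1+\<beta>1*x\<bar> powr p) \<in> borel_measurable borel" by measurable
    have Gbound: "(\<integral>\<^sup>+\<omega>. ennreal (\<bar>1+\<beta>1 * D m \<omega>\<bar> powr p) \<partial>M) \<le> ennreal (E * a powr p)" for m
    proof -
      have diffeq: "real (Suc m) * \<tau> - real m * \<tau> = \<tau>" by (simp add: algebra_simps)
      have dst: "distributed M lborel (D m) (\<lambda>x. ennreal (normal_density 0 (sqrt \<tau>) x))"
        using dist[OF st(1)[of m] st(2)[of m]] unfolding diffeq Deq .
      have gm': "(\<lambda>x::real. ennreal (\<bar>1+\<beta>1*x\<bar> powr p)) \<in> borel_measurable lborel" by measurable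
      have "(\<integral>\<^sup>+\<omega>. ennreal (\<bar>1+\<beta>1 * D m \<omega>\<bar> powr p) \<partial>M)
          = (\<integral>\<^sup>+x. ennreal (normal_density 0 (sqrt \<tau>) x) * ennreal (\<bar>1+\<beta>1*x\<bar> powr p) \<partial>lborel)"
        using distributed_nn_integral[OF dst gm'] by simp
      also have "\<dots> \<le> ennreal (1 + p*(p-1)/2*\<beta>1\<^sup>2*(sqrt \<tau>)\<^sup>2 + K3 p \<beta>1 * (sqrt \<tau>)^3)"
        using tt tau p_ge by (intro gauss_bound) auto
      also have "\<dots> \<le> ennreal (E * a powr p)" using tt by (intro ennreal_leI) auto
      finally show ?thesis .
    qed
    have rec: "(\<integral>\<^sup>+\<omega>. X (Suc m) \<omega> \<partial>M) \<le> ennreal E * (\<integral>\<^sup>+\<omega>. X m \<omega> \<partial>M)" for m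
    proof -
      define Xf where "Xf \<omega> = X m \<omega> / a powr p" for \<omega>
      define Gf where "Gf \<omega> = \<bar>1 + \<beta>1 * D m \<omega>\<bar> powr p" for \<omega>
      have XfM: "Xf \<in> borel_measurable (F (real m * \<tau>))"
        unfolding Xf_def[abs_def] by (rule borel_measurable_divide[OF Xmeas borel_measurable_const])
      have ind: "indep_var borel Xf borel (D m)"
        using bm_indep[OF BM st(1)[of m] st(2)[of m] XfM] unfolding Deq .
      have ind2: "indep_var borel Xf borel Gf"
        using indep_var_compose[OF ind measurable_ident_sets[OF refl] gm]
        by (simp add: o_def Gf_def[abs_def])
      have "(\<integral>\<^sup>+\<omega>. X (Suc m) \<omega> \<partial>M) \<le> (\<integral>\<^sup>+\<omega>. ennreal (Xf \<omega> * Gf \<omega>) \<partial>M)"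
      proof (intro nn_integral_mono ennreal_leI)
        fix \<omega>
        have "(\<bar>1 + \<beta>1 * D m \<omega>\<bar> powr p / a powr p) * X m \<omega> = Xf \<omega> * Gf \<omega>"
          by (simp add: Xf_def Gf_def)
        then show "X (Suc m) \<omega> \<le> Xf \<omega> * Gf \<omega>" using step[of m \<omega>] by simp
      qed
      also have "\<dots> = (\<integral>\<^sup>+\<omega>. Xf \<omega> \<partial>M) * (\<integral>\<^sup>+\<omega>. Gf \<omega> \<partial>M)"
        by (rule indep_var_nn_integral2[OF ind2]) (auto simp: Xf_def Gf_def X_nonneg ap)
      also have "(\<integral>\<^sup>+\<omega>. Xf \<omega> \<partial>M) = ennreal (1 / a powr p) * (\<integral>\<^sup>+\<omega>. X m \<omega> \<partial>M)"
      proof -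
        have "(\<integral>\<^sup>+\<omega>. Xf \<omega> \<partial>M) = (\<integral>\<^sup>+\<omega>. ennreal (1 / a powr p) * ennreal (X m \<omega>) \<partial>M)"
        proof (intro nn_integral_cong)
          fix \<omega>
          have "ennreal (1 / a powr p * X m \<omega>) = ennreal (1 / a powr p) * ennreal (X m \<omega>)"
            using ap X_nonneg[of m \<omega>] by (intro ennreal_mult) auto
          then show "ennreal (Xf \<omega>) = ennreal (1 / a powr p) * ennreal (X m \<omega>)" by (simp add: Xf_def)
        qed
        also have "\<dots> = ennreal (1 / a powr p) * (\<integral>\<^sup>+\<omega>. X m \<omega> \<partial>M)"
          using toM[OF Xmeas[of m]] by (intro nn_integral_cmult) measurable
        finally show ?thesis .
      qed
      also have "ennreal (1 / a powr p) * (\<integral>\<^sup>+\<omega>. X m \<omega> \<partial>M) * (\<integral>\<^sup>+\<omega>. Gf \<omega> \<partial>M)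
          \<le> ennreal (1 / a powr p) * (\<integral>\<^sup>+\<omega>. X m \<omega> \<partial>M) * ennreal (E * a powr p)"
        using Gbound[of m] unfolding Gf_def by (intro mult_left_mono) auto
      also have "\<dots> = (ennreal (1 / a powr p) * ennreal (E * a powr p)) * (\<integral>\<^sup>+\<omega>. X m \<omega> \<partial>M)"
        by (simp add: mult_ac)
      also have "ennreal (1 / a powr p) * ennreal (E * a powr p) = ennreal E"
      proof -
        have "ennreal (1 / a powr p) * ennreal (E * a powr p) = ennreal (1 / a powr p * (E * a powr p))"
          using ap E0 by (intro ennreal_mult[symmetric]) auto
        also have "1 / a powr p * (E * a powr p) = E" using ap by simp
        finally show ?thesis .
      qed
      finally show ?thesis .
    qed
    have iter: "(\<integral>\<^sup>+\<omega>. X m \<omega> \<partial>M) \<le> ennreal (E^m) * (\<integral>\<^sup>+\<omega>. X 0 \<omega> \<partial>M)" for m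
    proof (induction m)
      case 0 then show ?case by simp
    next
      case (Suc m)
      have "(\<integral>\<^sup>+\<omega>. X (Suc m) \<omega> \<partial>M) \<le> ennreal E * (\<integral>\<^sup>+\<omega>. X m \<omega> \<partial>M)" by (rule rec)
      also have "\<dots> \<le> ennreal E * (ennreal (E^m) * (\<integral>\<^sup>+\<omega>. X 0 \<omega> \<partial>M))"
        using Suc.IH by (intro mult_left_mono) auto
      also have "\<dots> = ennreal (E^Suc m) * (\<integral>\<^sup>+\<omega>. X 0 \<omega> \<partial>M)"
      proof -
        have "ennreal (E * E^m) = ennreal E * ennreal (E^m)" using E0 by (intro ennreal_mult) auto
        then show ?thesis by (simp add: mult.assoc)
      qed
      finally show ?case .
    qed
    have nphi: "norm (\<phi> k) = 1" if "1 \<le> k" for k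
      using onb_orth[OF that that] by (simp add: norm_eq_sqrt_inner)
    have X0eq: "X 0 \<omega> = normp p N (\<lambda>k. y0 \<omega> \<bullet> \<phi> k)" for \<omega> by (simp add: X_def Y0)
    have bound: "X 0 \<omega> \<le> real N powr (p/2) * norm (y0 \<omega>) powr p" for \<omega>
    proof -
      have "(\<Sum>k=1..N. \<bar>y0 \<omega> \<bullet> \<phi> k\<bar>\<^sup>2) \<le> (\<Sum>k=1..N. (norm (y0 \<omega>))\<^sup>2)"
      proof (rule sum_mono)
        fix k assume "k \<in> {1..N}"
        hence "\<bar>y0 \<omega> \<bullet> \<phi> k\<bar> \<le> norm (y0 \<omega>)" using Cauchy_Schwarz_ineq2[of "y0 \<omega>" "\<phi> k"] nphi[of k] by simp
        then show "\<bar>y0 \<omega> \<bullet> \<phi> k\<bar>\<^sup>2 \<le> (norm (y0 \<omega>))\<^sup>2" by (intro power_mono) auto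
      qed
      also have "\<dots> = real N * (norm (y0 \<omega>))\<^sup>2" by simp
      finally have S: "(\<Sum>k=1..N. \<bar>y0 \<omega> \<bullet> \<phi> k\<bar>\<^sup>2) \<le> real N * (norm (y0 \<omega>))\<^sup>2" .
      have "X 0 \<omega> \<le> (real N * (norm (y0 \<omega>))\<^sup>2) powr (p/2)"
        unfolding X0eq normp_def using S p_ge by (intro powr_mono2) (auto intro: sum_nonneg)
      also have "\<dots> = real N powr (p/2) * ((norm (y0 \<omega>))\<^sup>2) powr (p/2)" by (rule powr_mult)
      also have "((norm (y0 \<omega>))\<^sup>2) powr (p/2) = norm (y0 \<omega>) powr p" by (rule sq_powr) simp
      finally show ?thesis .
    qed
    have X0M: "X 0 \<in> borel_measurable M" by (rule toM[OF Xmeas])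
    have intX0: "integrable M (X 0)"
    proof (rule Bochner_Integration.integrable_bound[OF _ X0M])
      show "integrable M (\<lambda>\<omega>. real N powr (p/2) * norm (y0 \<omega>) powr p)"
        using y0_Lp by (rule integrable_mult_right)
      show "AE \<omega> in M. norm (X 0 \<omega>) \<le> norm (real N powr (p/2) * norm (y0 \<omega>) powr p)"
        using bound X_nonneg by (auto intro!: AE_I2 order_trans[OF _ abs_ge_self])
    qed
    have nn0: "(\<integral>\<^sup>+\<omega>. X 0 \<omega> \<partial>M) = ennreal (integral\<^sup>L M (X 0))"
      using intX0 X_nonneg by (intro nn_integral_eq_integral) auto
    have I0: "0 \<le> integral\<^sup>L M (X 0)" using X_nonneg by (intro integral_nonneg_AE) auto
    have fin: "integral\<^sup>L M (X n) \<le> E^n * integral\<^sup>L M (X 0)"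
    proof (cases "integrable M (X n)")
      case True
      have "ennreal (integral\<^sup>L M (X n)) = (\<integral>\<^sup>+\<omega>. X n \<omega> \<partial>M)"
        using True X_nonneg by (intro nn_integral_eq_integral[symmetric]) auto
      also have "\<dots> \<le> ennreal (E^n) * ennreal (integral\<^sup>L M (X 0))" using iter[of n] nn0 by simp
      also have "\<dots> = ennreal (E^n * integral\<^sup>L M (X 0))" using E0 I0 by (simp add: ennreal_mult)
      finally show ?thesis using E0 I0 by (subst (asm) ennreal_le_iff) auto
    next
      case False
      then show ?thesis using E0 I0 by (simp add: not_integrable_integral_eq)
    qed
    have Eeq: "exp (- ((p * (lam 1 - \<beta>0) - p * (p - 1) / 2 * \<beta>1\<^sup>2) / 2) * (real n * \<tau>)) = E^n"
    proof -
      have "exp (- ((p * (lam 1 - \<beta>0) - p * (p - 1) / 2 * \<beta>1\<^sup>2) / 2) * (real n * \<tau>))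
          = exp (real n * (- ((p*c - p*(p-1)/2*\<beta>1\<^sup>2)/2) * \<tau>))" by (simp add: c_def mult_ac)
      also have "\<dots> = E^n" unfolding E_def by (rule exp_of_nat_mult)
      finally show ?thesis .
    qed
    have Xn: "(\<lambda>\<omega>. normp p N (\<lambda>k. iem_scheme \<beta>0 \<beta>1 lam \<tau> W (\<lambda>k \<omega>. y0 \<omega> \<bullet> \<phi> k) n k \<omega>)) = X n"
      by (simp add: fun_eq_iff X_def Y_def)
    have X0': "(\<lambda>\<omega>. normp p N (\<lambda>k. y0 \<omega> \<bullet> \<phi> k)) = X 0" by (simp add: fun_eq_iff X0eq)
    show ?thesis unfolding Xn X0' Eeq using fin by simp
  qed
  show ?thesis
    apply (rule exI[where x=\<tau>0], rule conjI[OF t0])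
    apply (rule exI[where x="1::real"], rule conjI, simp)
    using main by blast
qed


end
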